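(* Let $\mathcal{M}$ be a matroid on $[n]$, let $\gamma$ be a basic $\ell$-cover of $\mathcal{M}$, and let $H$ be an independent set of $\mathcal{M}(\gamma)$ with $H\subseteq\operatorname{supp}\gamma$ and $\gamma(H)=\ell$. Then: (1) $\mathcal{M}(\gamma)/H=\mathcal{M}(\gamma)^0$, i.e. a set $I\subseteq[n]-H$ satisfies $I\cup H\in\mathcal{M}(\gamma)$ if and only if $I$ is independent in $\mathcal{M}(\gamma)|_{[n]-\operatorname{supp}\gamma}$; (2) if moreover $\gamma(i)\le 1$ for all $i\in[n]$, then $\mathcal{M}(\gamma)|_{[n]-\operatorname{supp}\gamma}=\mathcal{M}|_{[n]-\operatorname{supp}\gamma}$.
   Context: Matroids are identified with their independence complexes. For $\gamma:[n]\to\mathbb{N}_0$ and $S\subseteq[n]$, $\gamma(S)=\sum_{i\in S}\gamma(i)$, $\operatorname{supp}\gamma=\{i:\gamma(i)>0\}$. $\gamma$ is an $\ell$-cover of $\mathcal{M}$ if $\gamma(F)\ge\ell$ for every basis $F$, basic if minimal among $\ell$-covers in the pointwise order. $\mathcal{M}(\gamma)$ is the matroid (complex) generated by the bases $F$ of $\mathcal{M}$ with $\gamma(F)=\ell$, and $\mathcal{M}(\gamma)^0:=\mathcal{M}(\gamma)|_{[n]-\operatorname{supp}\gamma}$. $\mathcal{M}|_A$ denotes restriction and $\mathcal{M}/H$ contraction (independent sets $I\subseteq [n]-H$ with $I\cup H$ independent). *)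

theory Defs
  imports Main
begin

definition matroid :: "nat \<Rightarrow> nat set set \<Rightarrow> bool" where
  "matroid n M \<longleftrightarrow>
     (\<forall>I\<in>M. I \<subseteq> {1..n}) \<and> {} \<in> M \<and>
     (\<forall>I J. J \<in> M \<longrightarrow> I \<subseteq> J \<longrightarrow> I \<in> M) \<and>
     (\<forall>I J. I \<in> M \<longrightarrow> J \<in> M \<longrightarrow> card I < card J \<longrightarrow>
        (\<exists>x\<in>J - I. insert x I \<in> M))"

definition basis :: "nat set set \<Rightarrow> nat set \<Rightarrow> bool" where
  "basis M F \<longleftrightarrow> F \<in> M \<and> (\<forall>G\<in>M. F \<subseteq> G \<longrightarrow> G = F)"

definition supp :: "(nat \<Rightarrow> nat) \<Rightarrow> nat set" where
  "supp \<gamma> = {i. \<gamma> i > 0}"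

definition is_cover :: "nat set set \<Rightarrow> nat \<Rightarrow> (nat \<Rightarrow> nat) \<Rightarrow> bool" where
  "is_cover M l \<gamma> \<longleftrightarrow> (\<forall>F. basis M F \<longrightarrow> sum \<gamma> F \<ge> l)"

definition basic_cover :: "nat set set \<Rightarrow> nat \<Rightarrow> (nat \<Rightarrow> nat) \<Rightarrow> bool" where
  "basic_cover M l \<gamma> \<longleftrightarrow> is_cover M l \<gamma> \<and>
     (\<forall>\<delta>. is_cover M l \<delta> \<longrightarrow> (\<forall>i. \<delta> i \<le> \<gamma> i) \<longrightarrow> \<delta> = \<gamma>)"

definition Mgamma :: "nat set set \<Rightarrow> nat \<Rightarrow> (nat \<Rightarrow> nat) \<Rightarrow> nat set set" where
  "Mgamma M l \<gamma> = {I. \<exists>F. basis M F \<and> sum \<gamma> F = l \<and> I \<subseteq> F}"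

definition restrict_cx :: "nat set set \<Rightarrow> nat set \<Rightarrow> nat set set" where
  "restrict_cx M A = {I \<in> M. I \<subseteq> A}"

definition contract_cx :: "nat \<Rightarrow> nat set set \<Rightarrow> nat set \<Rightarrow> nat set set" where
  "contract_cx n M H = {I. I \<subseteq> {1..n} - H \<and> I \<union> H \<in> M}"

end

theory Submission
  imports Defs
begin

lemma mat_fin: "matroid n M \<Longrightarrow> I \<in> M \<Longrightarrow> finite I"
  unfolding matroid_def by (meson finite_atLeastAtMost finite_subset)

lemma mat_aug: "matroid n M \<Longrightarrow> I \<in> M \<Longrightarrow> J \<in> M \<Longrightarrow> card I < card J \<Longrightarrow> \<exists>x\<in>J - I. insert x I \<in> M"
  unfolding matroid_def by blast

lemma mat_sub: "matroid n M \<Longrightarrow> I \<in> M \<Longrightarrow> I \<subseteq> {1..n}"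
  unfolding matroid_def by blast

lemma mat_down: "matroid n M \<Longrightarrow> J \<in> M \<Longrightarrow> I \<subseteq> J \<Longrightarrow> I \<in> M"
  unfolding matroid_def by blast

lemma extend_basis:
  assumes m: "matroid n M" and I: "I \<in> M" and G: "basis M G"
  shows "\<exists>B. basis M B \<and> I \<subseteq> B \<and> B \<subseteq> I \<union> G"
proof -
  define S where "S = {B \<in> M. I \<subseteq> B \<and> B \<subseteq> I \<union> G}"
  have GM: "G \<in> M" using G unfolding basis_def by blast
  have sub: "\<And>X. X \<in> M \<Longrightarrow> X \<subseteq> {1..n}" using m mat_sub mat_down by blast
  have "S \<subseteq> Pow {1..n}" using sub unfolding S_def by blast
  hence finS: "finite S" by (meson finite_Pow_iff finite_atLeastAtMost finite_subset)
  have "I \<in> S" using I unfolding S_def by blast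
  hence ne: "card ` S \<noteq> {}" by blast
  have "Max (card ` S) \<in> card ` S" using finS ne by (intro Max_in) auto
  then obtain B where BS: "B \<in> S" and Bmax: "card B = Max (card ` S)" by auto
  have Bmax': "\<And>B'. B' \<in> S \<Longrightarrow> card B' \<le> card B"
    using finS Bmax by simp
  have BM: "B \<in> M" and IB: "I \<subseteq> B" and BIG: "B \<subseteq> I \<union> G" using BS unfolding S_def by auto
  have cG: "card G \<le> card B"
  proof (rule ccontr)
    assume "\<not> card G \<le> card B"
    hence "card B < card G" by simp
    then obtain x where x: "x \<in> G - B" "insert x B \<in> M"
      using mat_aug[OF m BM GM] by blast
    hence "insert x B \<in> S" using IB BIG unfolding S_def by auto
    hence "card (insert x B) \<le> card B" by (rule Bmax')
    moreover have "finite B" using mat_fin[OF m BM] .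
    ultimately show False using x by simp
  qed
  have "basis M B"
    unfolding basis_def
  proof (intro conjI BM ballI impI)
    fix B' assume B'M: "B' \<in> M" and BB': "B \<subseteq> B'"
    show "B' = B"
    proof (rule ccontr)
      assume "B' \<noteq> B"
      hence "B \<subset> B'" using BB' by blast
      hence "card B < card B'" using mat_fin[OF m B'M] by (simp add: psubset_card_mono)
      hence "card G < card B'" using cG by simp
      then obtain x where x: "x \<in> B' - G" "insert x G \<in> M"
        using mat_aug[OF m GM B'M] by blast
      hence "insert x G = G" using G unfolding basis_def by blast
      thus False using x by blast
    qed
  qed
  thus ?thesis using IB BIG by blast
qed

lemma sum_zero_nat:
  assumes "finite A" "sum (\<gamma>::nat\<Rightarrow>nat) A = 0" "x \<in> A" shows "\<gamma> x = 0"
  using assms by simp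

theorem proposition3p9:
  fixes n l :: nat and M :: "nat set set" and \<gamma> :: "nat \<Rightarrow> nat" and H :: "nat set"
  assumes "matroid n M"
    and "\<forall>i. i \<notin> {1..n} \<longrightarrow> \<gamma> i = 0"
    and "basic_cover M l \<gamma>"
    and "H \<in> Mgamma M l \<gamma>"
    and "H \<subseteq> supp \<gamma>"
    and "sum \<gamma> H = l"
  shows "contract_cx n (Mgamma M l \<gamma>) H
           = restrict_cx (Mgamma M l \<gamma>) ({1..n} - supp \<gamma>) \<and>
         ((\<forall>i\<in>{1..n}. \<gamma> i \<le> 1) \<longrightarrow>
           restrict_cx (Mgamma M l \<gamma>) ({1..n} - supp \<gamma>)
           = restrict_cx M ({1..n} - supp \<gamma>))"
proof -
  note m = assms(1)
  define N where "N = Mgamma M l \<gamma>"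
  define Z where "Z = {1..n} - supp \<gamma>"
  have sub: "\<And>X. X \<in> M \<Longrightarrow> X \<subseteq> {1..n}" using m mat_sub mat_down by blast
  have down: "\<And>X Y. Y \<in> M \<Longrightarrow> X \<subseteq> Y \<Longrightarrow> X \<in> M" using m mat_sub mat_down by blast
  have bM: "\<And>F. basis M F \<Longrightarrow> F \<in> M" unfolding basis_def by blast
  have cover: "\<And>F. basis M F \<Longrightarrow> l \<le> sum \<gamma> F"
    using assms(3) unfolding basic_cover_def is_cover_def by blast
  have NM: "\<And>X. X \<in> N \<Longrightarrow> X \<in> M"
    unfolding N_def Mgamma_def using down bM by blast
  have Ndown: "\<And>X Y. Y \<in> N \<Longrightarrow> X \<subseteq> Y \<Longrightarrow> X \<in> N"
    unfolding N_def Mgamma_def by blast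
  have zero: "\<And>F x. basis M F \<Longrightarrow> sum \<gamma> F = l \<Longrightarrow> H \<subseteq> F \<Longrightarrow> x \<in> F - H \<Longrightarrow> \<gamma> x = 0"
  proof -
    fix F x assume F: "basis M F" "sum \<gamma> F = l" "H \<subseteq> F" "x \<in> F - H"
    have fF: "finite F" using mat_fin[OF m bM[OF F(1)]] .
    have "sum \<gamma> F = sum \<gamma> H + sum \<gamma> (F - H)"
      using fF F(3) by (metis add.commute sum.subset_diff)
    hence "sum \<gamma> (F - H) = 0" using F(2) assms(6) by simp
    thus "\<gamma> x = 0" using fF F(4) by simp
  qed
  obtain G where G: "basis M G" "sum \<gamma> G = l" "H \<subseteq> G"
    using assms(4) unfolding Mgamma_def by blast
  have fH: "finite H" using mat_fin[OF m bM[OF G(1)]] G(3) finite_subset by blast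
  have K: "\<And>I. I \<in> M \<Longrightarrow> I \<subseteq> Z \<Longrightarrow> I \<union> H \<in> N"
  proof -
    fix I assume IM: "I \<in> M" and IZ: "I \<subseteq> Z"
    obtain B where B: "basis M B" "I \<subseteq> B" "B \<subseteq> I \<union> G"
      using extend_basis[OF m IM G(1)] by blast
    have fB: "finite B" using mat_fin[OF m bM[OF B(1)]] .
    have z1: "\<And>x. x \<in> B - H \<Longrightarrow> \<gamma> x = 0"
    proof -
      fix x assume x: "x \<in> B - H"
      show "\<gamma> x = 0"
      proof (cases "x \<in> I")
        case True thus ?thesis using IZ unfolding Z_def supp_def by auto
      next
        case False
        hence "x \<in> G - H" using x B(3) by blast
        thus ?thesis by (rule zero[OF G])
      qed
    qed
    have s1: "sum \<gamma> (B - H) = 0" using z1 fB by simp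
    have "sum \<gamma> B = sum \<gamma> (B \<inter> H) + sum \<gamma> (B - H)"
      using fB by (metis sum.Int_Diff)
    hence sB: "sum \<gamma> B = sum \<gamma> (B \<inter> H)" using s1 by simp
    have "sum \<gamma> H = sum \<gamma> (H \<inter> B) + sum \<gamma> (H - B)"
      using fH by (metis sum.Int_Diff)
    moreover have "l \<le> sum \<gamma> (B \<inter> H)" using cover[OF B(1)] sB by simp
    ultimately have "sum \<gamma> (H - B) = 0" using assms(6) by (simp add: Int_commute)
    hence "\<And>x. x \<in> H - B \<Longrightarrow> \<gamma> x = 0" using fH by simp
    hence HB: "H \<subseteq> B" using assms(5) unfolding supp_def by fastforce
    hence "B \<inter> H = H" by blast
    hence "sum \<gamma> B = l" using sB assms(6) by simp
    thus "I \<union> H \<in> N" unfolding N_def Mgamma_def using B HB by blast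
  qed
  have HZ: "H \<inter> Z = {}" using assms(5) unfolding Z_def by blast
  have p1: "contract_cx n N H = restrict_cx N Z"
  proof
    show "contract_cx n N H \<subseteq> restrict_cx N Z"
    proof
      fix I assume "I \<in> contract_cx n N H"
      hence I: "I \<subseteq> {1..n} - H" "I \<union> H \<in> N" unfolding contract_cx_def by auto
      then obtain F where F: "basis M F" "sum \<gamma> F = l" "I \<union> H \<subseteq> F"
        unfolding N_def Mgamma_def by blast
      have "\<And>x. x \<in> I \<Longrightarrow> \<gamma> x = 0" using zero[OF F(1,2)] F(3) I(1) by blast
      hence "I \<subseteq> Z" using I(1) unfolding Z_def supp_def by auto
      moreover have "I \<in> N" using Ndown[OF I(2)] by blast
      ultimately show "I \<in> restrict_cx N Z" unfolding restrict_cx_def by blast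
    qed
  next
    show "restrict_cx N Z \<subseteq> contract_cx n N H"
    proof
      fix I assume "I \<in> restrict_cx N Z"
      hence I: "I \<in> N" "I \<subseteq> Z" unfolding restrict_cx_def by auto
      have "I \<union> H \<in> N" using K[OF NM[OF I(1)] I(2)] .
      moreover have "I \<subseteq> {1..n} - H" using I(2) HZ unfolding Z_def by blast
      ultimately show "I \<in> contract_cx n N H" unfolding contract_cx_def by blast
    qed
  qed
  have p2: "restrict_cx N Z = restrict_cx M Z"
  proof
    show "restrict_cx N Z \<subseteq> restrict_cx M Z" unfolding restrict_cx_def using NM by blast
  next
    show "restrict_cx M Z \<subseteq> restrict_cx N Z"
    proof
      fix I assume "I \<in> restrict_cx M Z"
      hence I: "I \<in> M" "I \<subseteq> Z" unfolding restrict_cx_def by auto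
      have "I \<in> N" using Ndown[OF K[OF I]] by blast
      thus "I \<in> restrict_cx N Z" using I(2) unfolding restrict_cx_def by blast
    qed
  qed
  show ?thesis using p1 p2 unfolding N_def Z_def by blast
qed

end
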